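(* Let $\Bbbk$ be a field and $f(t)=1+\sum_{k\ge 1}a_kt^k\in\Bbbk[[t]]$. For $k\ge 0$ let $P_{f,k}(t)\in\Bbbk[t]$ be the polynomial $$P_{f,k}(t)=(-1)^k\det\begin{pmatrix} 1&a_1t&a_2t^2&\ldots &a_kt^k\\ 1&a_1&a_2&\ldots &a_k\\ 0&1&a_1&\ldots &a_{k-1}\\ \vdots&\vdots&\ddots&\ddots&\vdots\\ 0&0&\ldots &1&a_1 \end{pmatrix}$$ (a $(k+1)\times(k+1)$ determinant whose first row is $(1,a_1t,\dots,a_kt^k)$, second row $(1,a_1,\dots,a_k)$, and whose row $r\ge 3$ has $0$ in its first $r-2$ entries, $1$ in entry $r-1$, and then $a_1,a_2,\dots$), with the convention $P_{f,0}(t)=1$. Then, as formal power series in $x$ with coefficients in $\Bbbk[t]$, $$\frac{f(tx)}{f(x)}=\sum_{k\ge 0}P_{f,k}(t)\,x^k,$$ and for all $k\ge 0$, $$P_{f,k}(st)=\sum_{i=0}^k P_{f,i}(s)\,P_{f,k-i}(t)\,t^i$$ as polynomials in the independent variables $s,t$. *)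

theory Defs
  imports "HOL-Computational_Algebra.Polynomial"
          "HOL-Computational_Algebra.Formal_Power_Series"
          "Jordan_Normal_Form.Determinant"
begin

text \<open>The (k+1) x (k+1) matrix from the paper, with 0-indexed rows i and columns j.
  Coefficients a_j = fps_nth f j (with a_0 = fps_nth f 0 = 1).
  Row i >= 1: entry j is 0 if j < i - 1, and a_(j+1-i) otherwise
  (so row 1 is (1, a_1, ..., a_k), and row i >= 2 has i-1 zeros, then 1, a_1, ...).\<close>

definition Pmat :: "'a::field fps \<Rightarrow> nat \<Rightarrow> 'a poly mat" where
  "Pmat f k = mat (k+1) (k+1) (\<lambda>(i,j).
      if i = 0 then monom (fps_nth f j) j
      else if j + 1 < i then 0 else [:fps_nth f (j + 1 - i):])"

definition Ppoly :: "'a::field fps \<Rightarrow> nat \<Rightarrow> 'a poly" ("P\<^bsub>_,_\<^esub>") where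
  "Ppoly f k = (if k = 0 then 1 else (-1)^k * det (Pmat f k))"

text \<open>f(x) and f(tx) as power series in x with coefficients in k[t].\<close>
definition fps_const_lift :: "'a::field fps \<Rightarrow> 'a poly fps" where
  "fps_const_lift f = Abs_fps (\<lambda>n. [:fps_nth f n:])"

definition fps_scaled_t :: "'a::field fps \<Rightarrow> 'a poly fps" where
  "fps_scaled_t f = Abs_fps (\<lambda>n. monom (fps_nth f n) n)"

text \<open>Bivariate polynomials in s,t as 'a poly poly: outer variable t, inner variable s.\<close>
definition var_t :: "'a::field poly poly" where "var_t = [:0, 1:]"
definition var_s :: "'a::field poly poly" where "var_s = [:[:0, 1:]:]"

definition eval2 :: "'a::field poly \<Rightarrow> 'a poly poly \<Rightarrow> 'a poly poly" where
  "eval2 p u = poly (map_poly (\<lambda>c. [:[:c:]:]) p) u"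

end

theory Submission
  imports Defs
begin
lemma const_poly_add: "[:a + b:] = [:a:] + [:b:]" by simp

lemma const_poly_sum: "[:sum g A:] = (\<Sum>x\<in>A. [:g x:])"
  by (induction A rule: infinite_finite_induct) (auto simp: const_poly_add)

lemma conv_delta:
  fixes f :: "'a::field fps"
  assumes "fps_nth f 0 = 1"
  shows "(\<Sum>m=0..r. fps_nth f m * fps_nth (inverse f) (r - m)) = (if r = 0 then 1 else 0)"
proof -
  have "f * inverse f = 1" by (rule inverse_mult_eq_1') (simp add: assms)
  then have "fps_nth (f * inverse f) r = fps_nth (1::'a fps) r" by simp
  then show ?thesis by (simp add: fps_mult_nth)
qed

lemma shifted_sum:
  fixes f :: "'a::field fps"
  assumes f0: "fps_nth f 0 = 1" and i: "1 \<le> i" "i \<le> k" and l: "l \<le> k"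
  shows "(\<Sum>j<k+1. (if j + 1 < i then 0 else fps_nth f (j + 1 - i)) *
           (if j \<le> l then fps_nth (inverse f) (l - j) else 0)) = (if l + 1 = i then 1 else 0)"
proof (cases "i \<le> l + 1")
  case True
  have "(\<Sum>j<k+1. (if j + 1 < i then 0 else fps_nth f (j + 1 - i)) *
           (if j \<le> l then fps_nth (inverse f) (l - j) else 0))
     = (\<Sum>j\<in>{i-1..l}. fps_nth f (j + 1 - i) * fps_nth (inverse f) (l - j))"
    using l i by (intro sum.mono_neutral_cong_right) auto
  also have "\<dots> = (\<Sum>m\<in>{0..l+1-i}. fps_nth f m * fps_nth (inverse f) (l + 1 - i - m))"
  proof -
    have "(\<Sum>m\<in>{0+(i-1)..(l+1-i)+(i-1)}. fps_nth f (m + 1 - i) * fps_nth (inverse f) (l - m))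
        = (\<Sum>m\<in>{0..l+1-i}. fps_nth f (m + (i-1) + 1 - i) * fps_nth (inverse f) (l - (m + (i-1))))"
      by (rule sum.shift_bounds_cl_nat_ivl)
    moreover have "{0+(i-1)..(l+1-i)+(i-1)} = {i-1..l}" using True i by auto
    moreover have "\<And>m. m + (i-1) + 1 - i = m" "\<And>m. l - (m + (i-1)) = l + 1 - i - m" using i by auto
    ultimately show ?thesis by simp
  qed
  also have "\<dots> = (if l + 1 = i then 1 else 0)"
    using conv_delta[OF f0, of "l+1-i"] True by auto
  finally show ?thesis .
next
  case False
  then show ?thesis by (intro trans[OF sum.neutral]) auto
qed

lemma monom_const: "monom x j * [:y:] = monom (x * y) j"
  by (simp flip: monom_0 add: mult_monom)

lemma Ppoly_formula:
  fixes f :: "'a::field fps"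
  assumes f0: "fps_nth f 0 = 1"
  shows "Ppoly f k = (\<Sum>j\<le>k. monom (fps_nth f j * fps_nth (inverse f) (k - j)) j)"
proof -
  define b where "b = fps_nth (inverse f)"
  have b0: "b 0 = 1" using conv_delta[OF f0, of 0] f0 by (simp add: b_def)
  show ?thesis
  proof (cases "k = 0")
    case True
    then show ?thesis using b0 f0 by (simp add: Ppoly_def b_def)
  next
    case False
    define n where "n = k + 1"
    define M where "M = Pmat f k"
    define U :: "'a poly mat" where "U = mat n n (\<lambda>(j,l). if j \<le> l then [:b (l-j):] else 0)"
    define N where "N = M * U"
    have M: "M \<in> carrier_mat n n" by (simp add: M_def Pmat_def n_def)
    have U: "U \<in> carrier_mat n n" by (simp add: U_def)
    have N: "N \<in> carrier_mat n n" using M U by (simp add: N_def)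
    have "det U = prod_list (diag_mat U)"
      by (rule det_upper_triangular[OF _ U]) (auto simp: upper_triangular_def U_def)
    also have "\<dots> = prod_list (map (\<lambda>i. 1) [0..<n])"
      unfolding diag_mat_def using U by (intro arg_cong[where f=prod_list] map_cong) (auto simp: U_def b0)
    also have "\<dots> = 1" by (simp add: map_replicate_const)
    finally have detU: "det U = 1" .
    have detN: "det N = det M" using det_mult[OF M U] detU by (simp add: N_def)
    define w where "w = (\<lambda>l. \<Sum>j\<in>{0..<n}. monom (fps_nth f j) j * (if j \<le> l then [:b (l-j):] else 0))"
    have Nent: "N $$ (i,l) = (if i = 0 then w l else if l + 1 = i then 1 else 0)"
      if i: "i < n" and l: "l < n" for i l
    proof -
      have "N $$ (i,l) = (\<Sum>j\<in>{0..<n}. M $$ (i,j) * U $$ (j,l))"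
        using M U i l by (simp add: N_def scalar_prod_def)
      also have "\<dots> = (if i = 0 then w l else if l + 1 = i then 1 else 0)"
      proof (cases "i = 0")
        case True
        then show ?thesis using i l by (auto simp: w_def M_def Pmat_def U_def n_def intro!: sum.cong)
      next
        case False
        have "(\<Sum>j\<in>{0..<n}. M $$ (i,j) * U $$ (j,l)) =
           (\<Sum>j\<in>{0..<n}. [:(if j + 1 < i then 0 else fps_nth f (j + 1 - i)) *
           (if j \<le> l then fps_nth (inverse f) (l - j) else 0):])"
          using i l False by (intro sum.cong) (auto simp: M_def Pmat_def U_def n_def b_def mult_to_poly)
        also have "\<dots> = [:(\<Sum>j<k+1. (if j + 1 < i then 0 else fps_nth f (j + 1 - i)) *
           (if j \<le> l then fps_nth (inverse f) (l - j) else 0)):]"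
          unfolding n_def atLeast0LessThan by (rule const_poly_sum[symmetric])
        also have "\<dots> = (if l + 1 = i then 1 else 0)"
          by (subst shifted_sum[OF f0]) (use i l False in \<open>auto simp: n_def\<close>)
        finally show ?thesis using False by simp
      qed
      finally show ?thesis .
    qed
    have del: "mat_delete N 0 k = 1\<^sub>m k"
      by (rule eq_matI) (use N in \<open>auto simp: mat_delete_def Nent n_def\<close>)
    have "det N = (\<Sum>i<n. N $$ (i,k) * cofactor N i k)"
      by (rule laplace_expansion_column[OF N]) (simp add: n_def)
    also have "\<dots> = N $$ (0,k) * cofactor N 0 k"
    proof -
      have "(\<Sum>i<k. N $$ (Suc i,k) * cofactor N (Suc i) k) = 0"
        by (intro sum.neutral) (auto simp: Nent n_def)
      then show ?thesis unfolding n_def Suc_eq_plus1[symmetric] sum.lessThan_Suc_shift by simp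
    qed
    also have "\<dots> = w k * (-1)^k"
      by (simp add: Nent n_def cofactor_def del)
    finally have "det M = w k * (-1)^k" using detN by simp
    then have "Ppoly f k = w k"
      using False by (simp add: Ppoly_def M_def power_mult_distrib[symmetric] mult.left_commute)
    also have "\<dots> = (\<Sum>j\<le>k. monom (fps_nth f j * fps_nth (inverse f) (k - j)) j)"
      unfolding w_def n_def b_def by (intro sum.cong) (auto simp: smult_monom mult.commute)
    finally show ?thesis .
  qed
qed

lemma lift_mult: "fps_const_lift (X * Y) = fps_const_lift X * fps_const_lift (Y :: 'a::field fps)"
proof (rule fps_ext)
  fix n
  show "fps_nth (fps_const_lift (X * Y)) n = fps_nth (fps_const_lift X * fps_const_lift Y) n"
    unfolding fps_const_lift_def fps_mult_nth fps_nth_Abs_fps const_poly_sum mult_to_poly ..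
qed

lemma lift_one: "fps_const_lift (1 :: 'a::field fps) = 1"
  by (rule fps_ext) (simp add: fps_const_lift_def)

lemma P_fps:
  fixes f :: "'a::field fps"
  assumes f0: "fps_nth f 0 = 1"
  shows "Abs_fps (\<lambda>k. Ppoly f k) = fps_scaled_t f * fps_const_lift (inverse f)"
proof (rule fps_ext)
  fix n
  show "fps_nth (Abs_fps (\<lambda>k. Ppoly f k)) n = fps_nth (fps_scaled_t f * fps_const_lift (inverse f)) n"
    unfolding fps_mult_nth fps_scaled_t_def fps_const_lift_def fps_nth_Abs_fps Ppoly_formula[OF f0]
      atMost_atLeast0 monom_const ..
qed

lemma part1:
  fixes f :: "'a::field fps"
  assumes f0: "fps_nth f 0 = 1"
  shows "fps_scaled_t f = fps_const_lift f * Abs_fps (\<lambda>k. Ppoly f k)"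
proof -
  have fi: "f * inverse f = 1" by (rule inverse_mult_eq_1') (simp add: f0)
  have "fps_const_lift f * Abs_fps (\<lambda>k. Ppoly f k)
      = fps_scaled_t f * (fps_const_lift f * fps_const_lift (inverse f))"
    by (simp add: P_fps[OF f0] mult_ac)
  also have "\<dots> = fps_scaled_t f" by (simp flip: lift_mult add: fi lift_one)
  finally show ?thesis by simp
qed

definition GG :: "'a::field fps \<Rightarrow> 'a poly poly \<Rightarrow> 'a poly poly fps" where
  "GG X u = Abs_fps (\<lambda>n. [:[:fps_nth X n:]:] * u ^ n)"

lemma hh_sum: "[:[:sum g A:]:] = (\<Sum>x\<in>A. [:[:g x:]:])"
  by (simp add: const_poly_sum)

lemma GG_mult: "GG X u * GG Y u = GG (X * Y) u"
proof (rule fps_ext)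
  fix n
  show "fps_nth (GG X u * GG Y u) n = fps_nth (GG (X * Y) u) n"
    unfolding GG_def fps_mult_nth fps_nth_Abs_fps hh_sum sum_distrib_right
  proof (intro sum.cong refl)
    fix i assume "i \<in> {0..n}"
    then have "u ^ n = u ^ i * u ^ (n - i)" by (simp flip: power_add)
    then show "[:[:fps_nth X i:]:] * u ^ i * ([:[:fps_nth Y (n - i):]:] * u ^ (n - i)) =
          [:[:fps_nth X i * fps_nth Y (n - i):]:] * u ^ n"
    proof -
      have hm: "[:[:fps_nth X i * fps_nth Y (n - i):]:] = [:[:fps_nth X i:]:] * [:[:fps_nth Y (n - i):]:]"
        by (simp add: mult_to_poly)
      show ?thesis unfolding hm \<open>u ^ n = u ^ i * u ^ (n - i)\<close> by (simp only: mult_ac)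
    qed
  qed
qed

lemma GG_one: "GG 1 u = 1"
  by (rule fps_ext) (simp add: GG_def pCons_one)

lemma map_poly_hh_add: "map_poly (\<lambda>c. [:[:c:]:]) (p + q) = map_poly (\<lambda>c. [:[:c:]:]) p + map_poly (\<lambda>c. [:[:c:]:]) q"
  by (rule poly_eqI) (simp add: coeff_map_poly)

lemma map_poly_hh_sum: "map_poly (\<lambda>c. [:[:c:]:]) (sum g A) = (\<Sum>x\<in>A. map_poly (\<lambda>c. [:[:c:]:]) (g x))"
  by (induction A rule: infinite_finite_induct) (auto simp: map_poly_hh_add)

lemma eval2_P:
  fixes f :: "'a::field fps"
  assumes f0: "fps_nth f 0 = 1"
  shows "eval2 (Ppoly f k) u = (\<Sum>j\<le>k. [:[:fps_nth f j * fps_nth (inverse f) (k - j):]:] * u ^ j)"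
  by (simp add: Ppoly_formula[OF f0] eval2_def map_poly_hh_sum map_poly_monom poly_sum poly_monom)

lemma E_fps:
  fixes f :: "'a::field fps"
  assumes f0: "fps_nth f 0 = 1"
  shows "Abs_fps (\<lambda>k. eval2 (Ppoly f k) u) = GG f u * GG (inverse f) 1"
proof (rule fps_ext)
  fix n
  show "fps_nth (Abs_fps (\<lambda>k. eval2 (Ppoly f k) u)) n = fps_nth (GG f u * GG (inverse f) 1) n"
    unfolding GG_def fps_mult_nth fps_nth_Abs_fps eval2_P[OF f0] atMost_atLeast0
  proof (intro sum.cong refl)
    fix i assume "i \<in> {0..n}"
    have hm: "[:[:fps_nth f i * fps_nth (inverse f) (n - i):]:] = [:[:fps_nth f i:]:] * [:[:fps_nth (inverse f) (n - i):]:]"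
      by (simp add: mult_to_poly)
    show "[:[:fps_nth f i * fps_nth (inverse f) (n - i):]:] * u ^ i =
      [:[:fps_nth f i:]:] * u ^ i * ([:[:fps_nth (inverse f) (n - i):]:] * 1 ^ (n - i))"
      unfolding hm power_one mult_1_right by (simp only: mult_ac)
  qed
qed

lemma Es_fps:
  fixes f :: "'a::field fps"
  assumes f0: "fps_nth f 0 = 1"
  shows "Abs_fps (\<lambda>k. eval2 (Ppoly f k) s * t ^ k) = GG f (s * t) * GG (inverse f) t"
proof (rule fps_ext)
  fix n
  show "fps_nth (Abs_fps (\<lambda>k. eval2 (Ppoly f k) s * t ^ k)) n = fps_nth (GG f (s * t) * GG (inverse f) t) n"
    unfolding GG_def fps_mult_nth fps_nth_Abs_fps eval2_P[OF f0] atMost_atLeast0 sum_distrib_right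
  proof (intro sum.cong refl)
    fix i assume "i \<in> {0..n}"
    then have tn: "t ^ n = t ^ i * t ^ (n - i)" by (simp flip: power_add)
    have hm: "[:[:fps_nth f i * fps_nth (inverse f) (n - i):]:] = [:[:fps_nth f i:]:] * [:[:fps_nth (inverse f) (n - i):]:]"
      by (simp add: mult_to_poly)
    show "[:[:fps_nth f i * fps_nth (inverse f) (n - i):]:] * s ^ i * t ^ n =
      [:[:fps_nth f i:]:] * (s * t) ^ i * ([:[:fps_nth (inverse f) (n - i):]:] * t ^ (n - i))"
      unfolding hm tn power_mult_distrib by (simp only: mult_ac)
  qed
qed

theorem theorem1p1:
  fixes f :: "'a::field fps"
  assumes "fps_nth f 0 = 1"
  shows "fps_scaled_t f = fps_const_lift f * Abs_fps (\<lambda>k. Ppoly f k) \<and>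
         (\<forall>k. eval2 (Ppoly f k) (var_s * var_t) =
           (\<Sum>i\<le>k. eval2 (Ppoly f i) var_s * eval2 (Ppoly f (k - i)) var_t * var_t ^ i))"
proof (intro conjI allI)
  show "fps_scaled_t f = fps_const_lift f * Abs_fps (\<lambda>k. Ppoly f k)" by (rule part1[OF assms])
  fix k
  define s :: "'a poly poly" where "s = var_s"
  define t :: "'a poly poly" where "t = var_t"
  have fi: "inverse f * f = 1" by (rule inverse_mult_eq_1) (simp add: assms)
  have "Abs_fps (\<lambda>k. eval2 (Ppoly f k) (s * t))
      = Abs_fps (\<lambda>k. eval2 (Ppoly f k) s * t ^ k) * Abs_fps (\<lambda>k. eval2 (Ppoly f k) t)"
  proof -
    have "Abs_fps (\<lambda>k. eval2 (Ppoly f k) s * t ^ k) * Abs_fps (\<lambda>k. eval2 (Ppoly f k) t)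
        = GG f (s * t) * (GG (inverse f) t * GG f t) * GG (inverse f) 1"
      unfolding Es_fps[OF assms] E_fps[OF assms] by (simp only: mult_ac)
    also have "\<dots> = GG f (s * t) * GG (inverse f) 1"
      by (simp only: GG_mult fi GG_one mult_1_right)
    finally have X: "Abs_fps (\<lambda>k. eval2 (Ppoly f k) s * t ^ k) * Abs_fps (\<lambda>k. eval2 (Ppoly f k) t)
        = GG f (s * t) * GG (inverse f) 1" .
    show ?thesis by (subst E_fps[OF assms]) (rule X[symmetric])
  qed
  then have "fps_nth (Abs_fps (\<lambda>k. eval2 (Ppoly f k) (s * t))) k
      = fps_nth (Abs_fps (\<lambda>k. eval2 (Ppoly f k) s * t ^ k) * Abs_fps (\<lambda>k. eval2 (Ppoly f k) t)) k"
    by (simp only:)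
  then have "eval2 (Ppoly f k) (s * t) = (\<Sum>i=0..k. eval2 (Ppoly f i) s * t ^ i * eval2 (Ppoly f (k - i)) t)"
    unfolding fps_mult_nth fps_nth_Abs_fps .
  also have "\<dots> = (\<Sum>i\<le>k. eval2 (Ppoly f i) s * eval2 (Ppoly f (k - i)) t * t ^ i)"
    unfolding atMost_atLeast0 by (intro sum.cong refl) (simp only: mult_ac)
  finally show "eval2 (Ppoly f k) (var_s * var_t) =
           (\<Sum>i\<le>k. eval2 (Ppoly f i) var_s * eval2 (Ppoly f (k - i)) var_t * var_t ^ i)"
    unfolding s_def t_def .
qed

end
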